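(* Let $A$ and $B$ be independent and identically distributed real random variables with $\mathbb{E}[A]=0$ and $\operatorname{Var}(A)=1$. Then \[ \mathbb{E}\big[|A^2-B^2|\big]+4\,\big(\mathbb{E}\big[|A-B|\big]\big)^2\;\ge\;2 . \] *)

theory Defs
  imports "HOL-Probability.Probability"
begin

end

theory Submission
  imports Defs
begin

lemma pt0: fixes u v :: real assumes "u \<ge> 0" "v \<ge> 0"
  shows "u^2 + v^2 - 2 * (u * v) \<le> abs (u^2 - v^2)"
proof (cases "u \<ge> v")
  case True
  have "v * v \<le> u * v" using True assms by (intro mult_right_mono) auto
  thus ?thesis by (simp add: power2_eq_square)
next
  case False
  have "u * u \<le> u * v" using False assms by (intro mult_left_mono) auto
  thus ?thesis by (simp add: power2_eq_square)
qed
lemma pt: fixes a b :: real shows "a^2 + b^2 - 2 * (\<bar>a\<bar> * \<bar>b\<bar>) \<le> \<bar>a^2 - b^2\<bar>"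
  using pt0[of "\<bar>a\<bar>" "\<bar>b\<bar>"] by simp
lemma pt2: fixes a b :: real shows "\<bar>a\<bar> - sgn a * b \<le> \<bar>a - b\<bar>"
  by (cases "a > 0"; cases "a < 0") (auto simp: sgn_real_def)

lemma transfer_AB:
  fixes f :: "real \<Rightarrow> real"
  assumes A: "A \<in> borel_measurable M" and B: "B \<in> borel_measurable M"
    and d: "distr M borel A = distr M borel B" and f: "f \<in> borel_measurable borel"
  shows "integrable M (\<lambda>x. f (A x)) \<longleftrightarrow> integrable M (\<lambda>x. f (B x))"
    and "(\<integral>x. f (A x) \<partial>M) = (\<integral>x. f (B x) \<partial>M)"
proof -
  show "integrable M (\<lambda>x. f (A x)) \<longleftrightarrow> integrable M (\<lambda>x. f (B x))"
    using integrable_distr_eq[OF A f] integrable_distr_eq[OF B f] d by simp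
  show "(\<integral>x. f (A x) \<partial>M) = (\<integral>x. f (B x) \<partial>M)"
    using integral_distr[OF A f] integral_distr[OF B f] d by simp
qed

theorem mainTheorem1:
  fixes M :: "'a measure" and A B :: "'a \<Rightarrow> real"
  assumes "prob_space M"
    and "A \<in> borel_measurable M" and "B \<in> borel_measurable M"
    and "prob_space.indep_var M borel A borel B"
    and "distr M borel A = distr M borel B"
    and "integrable M (\<lambda>x. (A x)^2)"
    and "prob_space.expectation M A = 0"
    and "prob_space.variance M A = 1"
  shows "prob_space.expectation M (\<lambda>x. \<bar>(A x)^2 - (B x)^2\<bar>)
           + 4 * (prob_space.expectation M (\<lambda>x. \<bar>A x - B x\<bar>))^2 \<ge> 2"
proof -
  interpret prob_space M by fact
  note Am[measurable] = assms(2) and Bm[measurable] = assms(3)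
  note tr = transfer_AB[OF assms(2,3,5)]
  have A2: "integrable M (\<lambda>x. (A x)^2)" by fact
  have B2: "integrable M (\<lambda>x. (B x)^2)" using tr(1)[of "\<lambda>t. t^2"] A2 by simp
  have Ai: "integrable M A" using square_integrable_imp_integrable[OF Am A2] .
  have Bi: "integrable M B" using square_integrable_imp_integrable[OF Bm B2] .
  have EA2: "(\<integral>x. (A x)^2 \<partial>M) = 1" using assms(7,8) by simp
  have EB2: "(\<integral>x. (B x)^2 \<partial>M) = 1" using tr(2)[of "\<lambda>t. t^2"] EA2 by simp
  have EB: "(\<integral>x. B x \<partial>M) = 0" using tr(2)[of "\<lambda>t. t"] assms(7) by simp
  define a where "a = (\<integral>x. \<bar>A x\<bar> \<partial>M)"
  have EaB: "(\<integral>x. \<bar>B x\<bar> \<partial>M) = a" using tr(2)[of "\<lambda>t. \<bar>t\<bar>"] a_def by simp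
  have iabs: "indep_var borel (abs \<circ> A) borel (abs \<circ> B)"
    by (rule indep_var_compose[OF assms(4)]) auto
  have iabs': "indep_var borel (\<lambda>x. \<bar>A x\<bar>) borel (\<lambda>x. \<bar>B x\<bar>)"
    using iabs by (simp add: comp_def)
  have isgn: "indep_var borel (sgn \<circ> A) borel (id \<circ> B)"
    by (rule indep_var_compose[OF assms(4)]) auto
  have isgn': "indep_var borel (\<lambda>x. sgn (A x)) borel B"
    using isgn by (simp add: comp_def id_def)
  have Si: "integrable M (\<lambda>x. sgn (A x))"
    by (rule integrable_const_bound[where B=1]) (auto simp: sgn_real_def)
  have ES: "(\<integral>x. sgn (A x) * B x \<partial>M) = 0"
    using indep_var_lebesgue_integral[OF isgn' Si Bi] EB by simp
  have SBi: "integrable M (\<lambda>x. sgn (A x) * B x)"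
    using indep_var_integrable[OF isgn' Si Bi] .
  have EAB: "(\<integral>x. \<bar>A x\<bar> * \<bar>B x\<bar> \<partial>M) = a * a"
    using indep_var_lebesgue_integral[OF iabs' integrable_abs[OF Ai] integrable_abs[OF Bi]] EaB a_def by simp
  have ABi: "integrable M (\<lambda>x. \<bar>A x\<bar> * \<bar>B x\<bar>)"
    using indep_var_integrable[OF iabs' integrable_abs[OF Ai] integrable_abs[OF Bi]] .
  have i1: "integrable M (\<lambda>x. \<bar>(A x)^2 - (B x)^2\<bar>)"
    using A2 B2 by auto
  have i2: "integrable M (\<lambda>x. \<bar>A x - B x\<bar>)"
    using Ai Bi by auto
  have L1: "(\<integral>x. \<bar>(A x)^2 - (B x)^2\<bar> \<partial>M) \<ge> (\<integral>x. (A x)^2 + (B x)^2 - 2 * (\<bar>A x\<bar> * \<bar>B x\<bar>) \<partial>M)"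
  proof (rule integral_mono[OF _ i1])
    show "integrable M (\<lambda>x. (A x)^2 + (B x)^2 - 2 * (\<bar>A x\<bar> * \<bar>B x\<bar>))"
      using A2 B2 ABi by auto
    fix x
    show "(A x)^2 + (B x)^2 - 2 * (\<bar>A x\<bar> * \<bar>B x\<bar>) \<le> \<bar>(A x)^2 - (B x)^2\<bar>"
      by (rule pt)
  qed
  have L1': "(\<integral>x. (A x)^2 + (B x)^2 - 2 * (\<bar>A x\<bar> * \<bar>B x\<bar>) \<partial>M) = 2 - 2 * (a * a)"
    using A2 B2 ABi EA2 EB2 EAB by simp
  have L2: "(\<integral>x. \<bar>A x - B x\<bar> \<partial>M) \<ge> (\<integral>x. \<bar>A x\<bar> - sgn (A x) * B x \<partial>M)"
  proof (rule integral_mono[OF _ i2])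
    show "integrable M (\<lambda>x. \<bar>A x\<bar> - sgn (A x) * B x)" using Ai SBi by auto
    fix x
    show "\<bar>A x\<bar> - sgn (A x) * B x \<le> \<bar>A x - B x\<bar>" by (rule pt2)
  qed
  have L2': "(\<integral>x. \<bar>A x\<bar> - sgn (A x) * B x \<partial>M) = a"
    using Ai SBi ES a_def by simp
  have a0: "a \<ge> 0" unfolding a_def by simp
  define e where "e = (\<integral>x. \<bar>A x - B x\<bar> \<partial>M)"
  have "a * a \<le> e * e"
    using L2 L2' a0 unfolding e_def by (intro mult_mono) auto
  moreover have "0 \<le> a * a" using a0 by simp
  moreover have "e^2 = e * e" by (simp add: power2_eq_square)
  ultimately show ?thesis using L1 L1' unfolding e_def by linarith
qed

end
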